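(* Let $k$ be a field, $Q=k[x,y,z]$, $I\subseteq Q$ a nonzero monomial ideal contained in $(x,y,z)^2$, and $R=Q/I$. Then for every $1\le p\le 3-\operatorname{depth}(R)$, the Koszul homology $H_p(K^R)$ has a $k$-basis consisting of classes of cycles of the form $\overline{u}\,e_{x_{i_1}\cdots x_{i_p}}$, where $\{x_{i_1},\dots,x_{i_p}\}\subseteq\{x,y,z\}$ and $u\in I:(x_{i_1},\dots,x_{i_p})$ is a monomial, $\overline u$ denoting its residue class in $R$.
   Context: $K^R=R\otimes_Q K^Q$ is the Koszul complex of $R$ on the variables, realized as the exterior algebra on a free $R$-module with basis $e_x,e_y,e_z$ (variables ordered $x<y<z$); $e_{x_{i_1}\cdots x_{i_p}}=e_{x_{i_1}}\wedge\cdots\wedge e_{x_{i_p}}$ for $i_1<\dots<i_p$, and $\partial(e_{x_{i_1}\cdots x_{i_p}})=\sum_{j}(-1)^{j-1}x_{i_j}e_{x_{i_1}\cdots\widehat{x_{i_j}}\cdots x_{i_p}}$. $H_p(K^R)$ is its $p$-th homology. *)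

theory Defs
  imports Main "HOL-Library.Poly_Mapping" "HOL-Library.Product_Plus"
begin

text \<open>Monomials of Q = k[x,y,z] are exponent vectors (a,b,c); the variables
  x < y < z are indexed 0, 1, 2. Polynomials are finitely supported maps
  from monomials to k (Poly_Mapping, with convolution product).\<close>

type_synonym mon = "nat \<times> nat \<times> nat"
type_synonym 'k qpoly = "mon \<Rightarrow>\<^sub>0 'k"

definition xvar :: "nat \<Rightarrow> mon" where
  "xvar j = (if j = 0 then (1,0,0) else if j = 1 then (0,1,0) else (0,0,1))"

definition monom :: "mon \<Rightarrow> 'k::field qpoly" where
  "monom u = Poly_Mapping.single u 1"

definition X :: "nat \<Rightarrow> 'k::field qpoly" where
  "X j = monom (xvar j)"

definition ideal_gen :: "'k::field qpoly set \<Rightarrow> 'k qpoly set" where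
  "ideal_gen G = {f. \<exists>F c. finite F \<and> F \<subseteq> G \<and> f = (\<Sum>g\<in>F. c g * g)}"

definition is_ideal :: "'k::field qpoly set \<Rightarrow> bool" where
  "is_ideal I \<longleftrightarrow> 0 \<in> I \<and> (\<forall>f\<in>I. \<forall>g\<in>I. f + g \<in> I) \<and> (\<forall>f\<in>I. \<forall>q. q * f \<in> I)"

definition monomial_ideal :: "'k::field qpoly set \<Rightarrow> bool" where
  "monomial_ideal I \<longleftrightarrow> is_ideal I \<and> (\<exists>M. I = ideal_gen (monom ` M))"

definition max_ideal :: "'k::field qpoly set" where
  "max_ideal = ideal_gen {X 0, X 1, X 2}"

definition max_ideal_sq :: "'k::field qpoly set" where
  "max_ideal_sq = ideal_gen {X i * X j | i j. i < 3 \<and> j < 3}"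

definition colon :: "'k::field qpoly set \<Rightarrow> 'k qpoly set \<Rightarrow> 'k qpoly set" where
  "colon I J = {f. \<forall>g\<in>J. f * g \<in> I}"

text \<open>R = Q/I is handled through representatives in Q.\<close>
definition regular_seq :: "'k::field qpoly set \<Rightarrow> 'k qpoly list \<Rightarrow> bool" where
  "regular_seq I rs \<longleftrightarrow>
     set rs \<subseteq> max_ideal \<and>
     (\<forall>i < length rs. \<forall>f. rs ! i * f \<in> ideal_gen (I \<union> set (take i rs))
                          \<longrightarrow> f \<in> ideal_gen (I \<union> set (take i rs))) \<and>
     ideal_gen (I \<union> set rs) \<noteq> UNIV"

definition depthR :: "'k::field qpoly set \<Rightarrow> nat" where
  "depthR I = (GREATEST n. \<exists>rs. length rs = n \<and> regular_seq I rs)"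

text \<open>Koszul complex K^R = R \<otimes> K^Q: a chain assigns to each subset S of
  {0,1,2} (standing for e_S) a coefficient in Q, taken modulo I.\<close>
type_synonym 'k kchain = "nat set \<Rightarrow> 'k qpoly"

definition is_kchain :: "nat \<Rightarrow> 'k::field kchain \<Rightarrow> bool" where
  "is_kchain p z \<longleftrightarrow> (\<forall>S. z S \<noteq> 0 \<longrightarrow> S \<subseteq> {0,1,2} \<and> card S = p)"

text \<open>Component at e_T of the differential: coefficient of e_T in
  d(sum_S z_S e_S), with d(e_S) = sum_j (-1)^(pos j - 1) x_j e_{S - j}.\<close>
definition kdiff :: "'k::field kchain \<Rightarrow> 'k kchain" where
  "kdiff z T = (\<Sum>j \<in> {0,1,2} - T. (-1) ^ card {i\<in>T. i < j} * X j * z (insert j T))"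

definition kcycle :: "'k::field qpoly set \<Rightarrow> nat \<Rightarrow> 'k kchain \<Rightarrow> bool" where
  "kcycle I p z \<longleftrightarrow> is_kchain p z \<and> (\<forall>T. kdiff z T \<in> I)"

definition kboundary :: "'k::field qpoly set \<Rightarrow> nat \<Rightarrow> 'k kchain \<Rightarrow> bool" where
  "kboundary I p z \<longleftrightarrow> is_kchain p z \<and>
     (\<exists>w. is_kchain (Suc p) w \<and> (\<forall>S. z S - kdiff w S \<in> I))"

definition kelem :: "mon \<Rightarrow> nat set \<Rightarrow> 'k::field kchain" where
  "kelem u T = (\<lambda>S. if S = T then monom u else 0)"

definition kscale :: "'k::field \<Rightarrow> 'k kchain \<Rightarrow> 'k kchain" where
  "kscale a z = (\<lambda>S. Poly_Mapping.single 0 a * z S)"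

text \<open>The classes of the cycles kelem u T, (u,T) \<in> B, form a k-basis of
  H_p(K^R) = Z_p / B_p: they are cycles, linearly independent modulo
  boundaries, and together with the boundaries span the cycles.\<close>
definition homology_basis :: "'k::field qpoly set \<Rightarrow> nat \<Rightarrow> (mon \<times> nat set) set \<Rightarrow> bool" where
  "homology_basis I p B \<longleftrightarrow>
     (\<forall>(u,T)\<in>B. kcycle I p (kelem u T)) \<and>
     (\<forall>F c. finite F \<and> F \<subseteq> B \<and>
        kboundary I p (\<lambda>S. \<Sum>(u,T)\<in>F. kscale (c (u,T)) (kelem u T) S)
        \<longrightarrow> (\<forall>b\<in>F. c b = 0)) \<and>
     (\<forall>z. kcycle I p z \<longrightarrow>
        (\<exists>F c. finite F \<and> F \<subseteq> B \<and>
           kboundary I p (\<lambda>S. z S - (\<Sum>(u,T)\<in>F. kscale (c (u,T)) (kelem u T) S))))"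

end

theory Submission imports Defs "HOL-Library.Function_Algebras" "HOL.Vector_Spaces" begin

abbreviation lk :: "'k::field qpoly \<Rightarrow> mon \<Rightarrow> 'k" where "lk \<equiv> Poly_Mapping.lookup"

definition cmp :: "mon \<Rightarrow> nat \<Rightarrow> nat" where
  "cmp a j = (if j = 0 then fst a else if j = 1 then fst (snd a) else snd (snd a))"

definition ev :: "nat set \<Rightarrow> mon" where
  "ev T = ((if 0 \<in> T then 1 else 0), (if 1 \<in> T then 1 else 0), (if 2 \<in> T then 1 else 0))"

lemma lookup_single_mult_ex:
  fixes f :: "'k::field qpoly"
  shows "lk (Poly_Mapping.single u a * f) (u + q) = a * lk f q"
proof -
  have "lk (Poly_Mapping.single u a * f) (u + q) = (\<Sum>l. lk (Poly_Mapping.single u a) l * (\<Sum>q'. lk f q' when u + q = l + q'))"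
    by (simp add: lookup_mult)
  also have "\<dots> = (\<Sum>l. (a * (\<Sum>q'. lk f q' when u + q = l + q')) when u = l)"
    by (rule Sum_any.cong) (simp add: lookup_single when_def)
  also have "\<dots> = a * (\<Sum>q'. lk f q' when u + q = u + q')"
    by (simp add: when_def)
  also have "(\<Sum>q'. lk f q' when u + q = u + q') = (\<Sum>q'. lk f q' when q' = q)"
    by (rule Sum_any.cong) (auto simp: when_def)
  also have "\<dots> = lk f q" by (simp add: when_def)
  finally show ?thesis .
qed

lemma lookup_single_mult_nex:
  fixes f :: "'k::field qpoly"
  assumes "\<not> (\<exists>q. k = u + q)"
  shows "lk (Poly_Mapping.single u a * f) k = 0"
proof -
  have "lk (Poly_Mapping.single u a * f) k = (\<Sum>l. lk (Poly_Mapping.single u a) l * (\<Sum>q'. lk f q' when k = l + q'))"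
    by (simp add: lookup_mult)
  also have "\<dots> = (\<Sum>l. (a * (\<Sum>q'. lk f q' when k = l + q')) when u = l)"
    by (rule Sum_any.cong) (simp add: lookup_single when_def)
  also have "\<dots> = a * (\<Sum>q'. lk f q' when k = u + q')"
    by (simp add: when_def)
  also have "(\<lambda>q'. lk f q' when k = u + q') = (\<lambda>_. 0)"
    using assms by (auto simp: when_def fun_eq_iff)
  finally show ?thesis by simp
qed

lemma X_eq: "X j = Poly_Mapping.single (xvar j) 1"
  by (simp add: X_def monom_def)

lemma lookup_Xmult:
  fixes f :: "'k::field qpoly"
  shows "lk (Poly_Mapping.single (xvar j) a * f) b =
     (if 1 \<le> cmp b j then a * lk f (b - xvar j) else 0)"
proof (cases "1 \<le> cmp b j")
  case True
  then have "b = xvar j + (b - xvar j)"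
    by (cases b) (auto simp: cmp_def xvar_def split: if_splits)
  then show ?thesis using True lookup_single_mult_ex[of "xvar j" a f "b - xvar j"] by simp
next
  case False
  then have "\<not> (\<exists>q. b = xvar j + q)"
    by (cases b) (auto simp: cmp_def xvar_def split: if_splits)
  then show ?thesis using False lookup_single_mult_nex by simp
qed

lemma pm_expand:
  fixes f :: "'k::field qpoly"
  shows "f = (\<Sum>b\<in>Poly_Mapping.keys f. Poly_Mapping.single b (lk f b))"
proof (rule poly_mapping_eqI)
  fix k
  show "lk f k = lk (\<Sum>b\<in>Poly_Mapping.keys f. Poly_Mapping.single b (lk f b)) k"
    by (simp add: lookup_sum lookup_single when_def in_keys_iff)
qed

lemma ideal_sum:
  assumes "is_ideal I" "finite A" "\<And>a. a \<in> A \<Longrightarrow> g a \<in> I"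
  shows "(\<Sum>a\<in>A. g a) \<in> I"
  using assms(2,3)
proof (induction A rule: finite_induct)
  case empty then show ?case using assms(1) by (simp add: is_ideal_def)
next
  case (insert x F) then show ?case using assms(1) by (simp add: is_ideal_def)
qed

lemma ideal_mult: "is_ideal I \<Longrightarrow> f \<in> I \<Longrightarrow> q * f \<in> I"
  by (simp add: is_ideal_def)

lemma ideal_add: "is_ideal I \<Longrightarrow> f \<in> I \<Longrightarrow> g \<in> I \<Longrightarrow> f + g \<in> I"
  by (simp add: is_ideal_def)

lemma ideal_zero: "is_ideal I \<Longrightarrow> 0 \<in> I"
  by (simp add: is_ideal_def)

lemma ideal_uminus: "is_ideal (I::'k::field qpoly set) \<Longrightarrow> f \<in> I \<Longrightarrow> - f \<in> I"
  using ideal_mult[of I f "-1"] by simp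

lemma ideal_diff: "is_ideal (I::'k::field qpoly set) \<Longrightarrow> f \<in> I \<Longrightarrow> g \<in> I \<Longrightarrow> f - g \<in> I"
  using ideal_add[of I f "-g"] ideal_uminus[of I g] by simp

lemma monom_add: "monom (a + b) = (monom a * monom b :: 'k::field qpoly)"
  by (simp add: monom_def mult_single)

lemma single_as_mult: "Poly_Mapping.single b c = Poly_Mapping.single 0 c * (monom b :: 'k::field qpoly)"
  by (simp add: monom_def mult_single)

lemma mem_monomial_ideal:
  fixes I :: "'k::field qpoly set"
  assumes "monomial_ideal I"
  shows "f \<in> I \<longleftrightarrow> (\<forall>b\<in>Poly_Mapping.keys f. monom b \<in> I)"
proof
  have id: "is_ideal I" using assms by (simp add: monomial_ideal_def)
  obtain M where M: "I = ideal_gen (monom ` M)" using assms by (auto simp: monomial_ideal_def)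
  assume "f \<in> I"
  then obtain F c where F: "finite F" "F \<subseteq> monom ` M" "f = (\<Sum>g\<in>F. c g * g)"
    using M by (auto simp: ideal_gen_def)
  show "\<forall>b\<in>Poly_Mapping.keys f. monom b \<in> I"
  proof
    fix b assume "b \<in> Poly_Mapping.keys f"
    then obtain g where g: "g \<in> F" "b \<in> Poly_Mapping.keys (c g * g)"
      using keys_sum[of "\<lambda>g. c g * g" F] F(3) by blast
    obtain m where m: "m \<in> M" "g = monom m" using g F(2) by auto
    have "Poly_Mapping.keys (c g * g) \<subseteq> {a + m' |a m'. a \<in> Poly_Mapping.keys (c g) \<and> m' \<in> Poly_Mapping.keys g}"
      by (rule keys_mult)
    then obtain a where a: "b = a + m" using g m by (auto simp: monom_def)
    have "monom m \<in> I"
    proof -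
      have "monom m = (\<Sum>g\<in>{monom m}. (\<lambda>_. 1) g * g)" by simp
      then show ?thesis unfolding M ideal_gen_def using m(1)
        by (intro CollectI exI[of _ "{monom m}"] exI[of _ "\<lambda>_. 1"]) auto
    qed
    then have "monom a * monom m \<in> I" by (rule ideal_mult[OF id])
    then show "monom b \<in> I" unfolding a monom_add .
  qed
next
  have id: "is_ideal I" using assms by (simp add: monomial_ideal_def)
  assume A: "\<forall>b\<in>Poly_Mapping.keys f. monom b \<in> I"
  have "(\<Sum>b\<in>Poly_Mapping.keys f. Poly_Mapping.single b (lk f b)) \<in> I"
  proof (intro ideal_sum[OF id])
    fix b assume "b \<in> Poly_Mapping.keys f"
    then have "Poly_Mapping.single 0 (lk f b) * monom b \<in> I" using A ideal_mult[OF id] by blast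
    then show "Poly_Mapping.single b (lk f b) \<in> I" by (subst single_as_mult)
  qed simp
  then show "f \<in> I" using pm_expand[of f] by simp
qed

lemma subsets012: "T \<subseteq> {0,1,2::nat} \<Longrightarrow> T = {} \<or> T = {0} \<or> T = {1} \<or> T = {2} \<or> T = {0,1} \<or> T = {0,2} \<or> T = {1,2} \<or> T = {0,1,2}"
proof -
  assume "T \<subseteq> {0,1,2}"
  then have "T \<in> Pow {0,1,2}" by simp
  also have "Pow {0,1,2::nat} = {{},{0},{1},{2},{0,1},{0,2},{1,2},{0,1,2}}"
    by (simp add: Pow_insert insert_commute)
  finally show ?thesis by simp
qed

definition sgn3 :: "nat \<Rightarrow> nat set \<Rightarrow> 'k::field" where
  "sgn3 j T = (-1) ^ card {i\<in>T. i < j}"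

definition dk :: "(nat set \<Rightarrow> 'k::field) \<Rightarrow> nat set \<Rightarrow> 'k" where
  "dk c T = (\<Sum>j\<in>{0,1,2} - T. sgn3 j T * c (insert j T))"

definition hh :: "nat \<Rightarrow> (nat set \<Rightarrow> 'k::field) \<Rightarrow> nat set \<Rightarrow> 'k" where
  "hh a c T = (if a \<in> T then sgn3 a (T - {a}) * c (T - {a}) else 0)"

lemma sgn3_empty[simp]: "sgn3 j {} = 1" by (simp add: sgn3_def)

lemma sgn3_insert[simp]: "finite T \<Longrightarrow> sgn3 j (insert i T) = (if i < j \<and> i \<notin> T then - sgn3 j T else sgn3 j T)"
proof -
  assume f: "finite T"
  have e: "{x \<in> insert i T. x < j} = (if i < j then insert i {x\<in>T. x < j} else {x\<in>T. x < j})" by auto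
  have f2: "finite {x\<in>T. x < j}" using f by simp
  show ?thesis unfolding sgn3_def e using f2 by (cases "i < j"; cases "i \<in> T") (auto simp: insert_absorb)
qed

lemma homotopy:
  assumes "a \<in> {0,1,2}" "T \<subseteq> {0,1,2}"
  shows "dk (hh a c) T + hh a (dk c) T = (c T :: 'k::field)"
  using assms(1) subsets012[OF assms(2)]
  apply (elim disjE insertE)
  apply (simp_all add: dk_def hh_def insert_commute insert_Diff_if)
  done
context vector_space begin

lemma quot_basis:
  assumes W: "subspace W" and inj: "inj_on e P"
    and sp: "\<And>z. z \<in> Z \<Longrightarrow> \<exists>s\<in>span (e ` P). z - s \<in> W"
  shows "\<exists>B\<subseteq>P. (\<forall>F c. finite F \<longrightarrow> F \<subseteq> B \<longrightarrow> (\<Sum>x\<in>F. c x *s e x) \<in> W \<longrightarrow> (\<forall>x\<in>F. c x = 0))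
     \<and> (\<forall>z\<in>Z. \<exists>F c. finite F \<and> F \<subseteq> B \<and> z - (\<Sum>x\<in>F. c x *s e x) \<in> W)"
proof -
  obtain BW where BW: "BW \<subseteq> W" "independent BW" "W \<subseteq> span BW"
    by (rule maximal_independent_subset_extend[of "{}" W]) (simp_all add: independent_empty)
  obtain B' where B': "BW \<subseteq> B'" "B' \<subseteq> BW \<union> e ` P" "independent B'" "BW \<union> e ` P \<subseteq> span B'"
    by (rule maximal_independent_subset_extend[of BW "BW \<union> e ` P"]) (simp_all add: BW(2))
  have spanBW: "span BW = W"
    using span_minimal[OF BW(1) W] BW(3) span_superset[of BW] by auto
  define B where "B = {x\<in>P. e x \<in> B' - BW}"
  have P0: "B \<subseteq> P" by (auto simp: B_def)
  have P1: "\<forall>F c. finite F \<longrightarrow> F \<subseteq> B \<longrightarrow> (\<Sum>x\<in>F. c x *s e x) \<in> W \<longrightarrow> (\<forall>x\<in>F. c x = 0)"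
  proof (intro allI impI ballI)
    fix F c x assume F: "finite F" "F \<subseteq> B" "(\<Sum>x\<in>F. c x *s e x) \<in> W" "x \<in> F"
    have "(\<Sum>x\<in>F. c x *s e x) \<in> span BW" using F(3) BW(3) by auto
    then obtain t u where t: "finite t" "t \<subseteq> BW" "(\<Sum>v\<in>t. u v *s v) = (\<Sum>x\<in>F. c x *s e x)"
      unfolding span_explicit by auto
    have injF: "inj_on e F" using inj F(2) by (auto simp: B_def intro: inj_on_subset)
    have disj: "e ` F \<inter> t = {}" using F(2) t(2) by (auto simp: B_def)
    define g where "g v = (if v \<in> e ` F then c (the_inv_into F e v) else - u v)" for v
    have s1: "(\<Sum>v\<in>e ` F. g v *s v) = (\<Sum>x\<in>F. c x *s e x)"
      by (simp add: sum.reindex[OF injF] g_def the_inv_into_f_f[OF injF])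
    have s2: "(\<Sum>v\<in>t. g v *s v) = - (\<Sum>v\<in>t. u v *s v)"
      using disj by (simp add: g_def sum_negf[symmetric] cong: sum.cong) (rule sum.cong, auto)
    have "(\<Sum>v\<in>e ` F \<union> t. g v *s v) = 0"
      using s1 s2 t(3) by (simp add: sum.union_disjoint[OF _ t(1) disj] F(1))
    moreover have "e ` F \<union> t \<subseteq> B'" using F(2) t(2) B'(1) by (auto simp: B_def)
    ultimately have "g (e x) = 0"
      using independentD[OF B'(3), of "e ` F \<union> t" g "e x"] F(1,4) t(1) by auto
    then show "c x = 0" using F(4) by (simp add: g_def the_inv_into_f_f[OF injF])
  qed
  have P2: "\<forall>z\<in>Z. \<exists>F c. finite F \<and> F \<subseteq> B \<and> z - (\<Sum>x\<in>F. c x *s e x) \<in> W"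
  proof
    fix z assume "z \<in> Z"
    then obtain s where s: "s \<in> span (e ` P)" "z - s \<in> W" using sp by blast
    have "span (e ` P) \<subseteq> span B'" using B'(4) span_minimal[of "e ` P" "span B'"] by auto
    then have sB': "s \<in> span B'" using s(1) by blast
    have "(B' - BW) \<union> BW = B'" using B'(1) by blast
    then have "s \<in> span ((B' - BW) \<union> BW)" using sB' by simp
    then obtain s0 s1 where s01: "s = s0 + s1" "s0 \<in> span (B' - BW)" "s1 \<in> span BW"
      unfolding span_Un by auto
    obtain t r where t: "finite t" "t \<subseteq> B' - BW" "s0 = (\<Sum>v\<in>t. r v *s v)"
      using s01(2) unfolding span_explicit by auto
    have "t \<subseteq> e ` B" using t(2) B'(2) by (auto simp: B_def)
    then have "\<exists>U. U \<subseteq> B \<and> inj_on e U \<and> t = e ` U" by (simp only: subset_image_inj)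
    then obtain F where F: "F \<subseteq> B" "inj_on e F" "t = e ` F" by (elim exE conjE)
    have fF: "finite F" using t(1) F(2,3) finite_image_iff by auto
    have eq: "s0 = (\<Sum>x\<in>F. r (e x) *s e x)"
      using t(3) F(3) by (simp add: sum.reindex[OF F(2)])
    have "z - s0 = (z - s) + s1" using s01(1) by (simp add: algebra_simps)
    also have "\<dots> \<in> W" using subspace_add[OF W s(2)] s01(3) spanBW by auto
    finally have zW: "z - s0 \<in> W" .
    show "\<exists>F c. finite F \<and> F \<subseteq> B \<and> z - (\<Sum>x\<in>F. c x *s e x) \<in> W"
      using zW fF F(1) eq by (intro exI[of _ F] exI[of _ "\<lambda>x. r (e x)"]) simp
  qed
  show ?thesis using P0 P1 P2 by blast
qed

end


lemma sum_fun_apply: "(\<Sum>x\<in>F. f x) S = (\<Sum>x\<in>F. (f x S :: 'b::comm_monoid_add))"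
  by (induction F rule: infinite_finite_induct) auto

interpretation kv: vector_space "kscale :: 'k::field \<Rightarrow> 'k kchain \<Rightarrow> 'k kchain"
  by unfold_locales (auto simp: kscale_def fun_eq_iff algebra_simps single_add mult_single)

lemma kscale_kelem: "kscale a (kelem u T) S = (if S = T then Poly_Mapping.single u a else 0)"
  by (simp add: kscale_def kelem_def monom_def mult_single)

lemma monom_nonzero: "monom u \<noteq> (0::'k::field qpoly)"
proof
  assume "monom u = (0::'k qpoly)"
  then have "lk (monom u :: 'k qpoly) u = 0" by simp
  then show False by (simp add: monom_def)
qed

lemma monom_inj: "monom u = (monom v :: 'k::field qpoly) \<Longrightarrow> u = v"
proof -
  assume "monom u = (monom v :: 'k::field qpoly)"
  then have "lk (monom u :: 'k qpoly) u = lk (monom v :: 'k qpoly) u" by simp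
  then show "u = v" by (simp add: monom_def lookup_single when_def split: if_splits)
qed

lemma kelem_inj: "inj (\<lambda>x. kelem (fst x) (snd x) :: 'k::field kchain)"
proof (rule injI)
  fix x y :: "mon \<times> nat set"
  assume e: "(kelem (fst x) (snd x) :: 'k kchain) = kelem (fst y) (snd y)"
  then have e1: "(kelem (fst x) (snd x) :: 'k kchain) (snd x) = kelem (fst y) (snd y) (snd x)" by simp
  then have "snd x = snd y" using monom_nonzero[of "fst x", where 'k='k] by (auto simp: kelem_def split: if_splits)
  then show "x = y" using e1 monom_inj[of "fst x" "fst y", where 'k='k]
    by (cases x; cases y) (auto simp: kelem_def)
qed

lemma kdiff_add: "kdiff (w1 + w2) T = kdiff w1 T + kdiff w2 T"
  by (simp add: kdiff_def sum.distrib distrib_left)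

lemma kdiff_scale: "kdiff (kscale a w) T = Poly_Mapping.single 0 a * kdiff w T"
  by (simp add: kdiff_def kscale_def sum_distrib_left mult_ac)

lemma kdiff_zero: "kdiff (0::'k::field kchain) T = 0"
  by (simp add: kdiff_def)

lemma kb_subspace:
  assumes "monomial_ideal (I :: 'k::field qpoly set)"
  shows "kv.subspace (Collect (kboundary I p))"
proof -
  have id: "is_ideal I" using assms by (simp add: monomial_ideal_def)
  have z: "kboundary I p 0"
    unfolding kboundary_def is_kchain_def
    by (intro conjI exI[of _ 0]) (auto simp: kdiff_zero ideal_zero[OF id])
  have a: "kboundary I p (z1 + z2)" if kb1: "kboundary I p z1" and kb2: "kboundary I p z2" for z1 z2
  proof -
    obtain w1 where w1: "is_kchain (Suc p) w1" "\<forall>S. z1 S - kdiff w1 S \<in> I" "is_kchain p z1"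
      using kb1 by (auto simp: kboundary_def)
    obtain w2 where w2: "is_kchain (Suc p) w2" "\<forall>S. z2 S - kdiff w2 S \<in> I" "is_kchain p z2"
      using kb2 by (auto simp: kboundary_def)
    show ?thesis unfolding kboundary_def
    proof (intro conjI exI[of _ "w1 + w2"] allI)
      show "is_kchain p (z1 + z2)" using w1(3) w2(3) unfolding is_kchain_def by (metis add.right_neutral plus_fun_apply)
      show "is_kchain (Suc p) (w1 + w2)" using w1(1) w2(1) unfolding is_kchain_def by (metis add.right_neutral plus_fun_apply)
      fix S
      have "(z1 + z2) S - kdiff (w1 + w2) S = (z1 S - kdiff w1 S) + (z2 S - kdiff w2 S)"
        by (simp add: kdiff_add algebra_simps)
      then show "(z1 + z2) S - kdiff (w1 + w2) S \<in> I" using w1(2) w2(2) ideal_add[OF id] by metis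
    qed
  qed
  have s: "kboundary I p (kscale c z1)" if kb1: "kboundary I p z1" for z1 c
  proof -
    obtain w1 where w1: "is_kchain (Suc p) w1" "\<forall>S. z1 S - kdiff w1 S \<in> I" "is_kchain p z1"
      using kb1 by (auto simp: kboundary_def)
    show ?thesis unfolding kboundary_def
    proof (intro conjI exI[of _ "kscale c w1"] allI)
      show "is_kchain p (kscale c z1)" using w1(3) unfolding is_kchain_def kscale_def by (metis mult_zero_right)
      show "is_kchain (Suc p) (kscale c w1)" using w1(1) unfolding is_kchain_def kscale_def by (metis mult_zero_right)
      fix S
      have "kscale c z1 S - kdiff (kscale c w1) S = Poly_Mapping.single 0 c * (z1 S - kdiff w1 S)"
        using kdiff_scale[of c w1 S] by (simp add: kscale_def right_diff_distrib)
      then show "kscale c z1 S - kdiff (kscale c w1) S \<in> I" using w1(2) ideal_mult[OF id] by metis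
    qed
  qed
  show ?thesis unfolding kv.subspace_def using z a s by auto
qed

definition Pset :: "'k::field qpoly set \<Rightarrow> nat \<Rightarrow> (mon \<times> nat set) set" where
  "Pset I p = {(u,T). T \<subseteq> {0,1,2} \<and> card T = p \<and> (\<forall>j\<in>T. monom (u + xvar j) \<in> I)}"

lemma X_monom: "X j * monom u = (monom (u + xvar j) :: 'k::field qpoly)"
  by (simp add: X_def monom_add mult.commute)

lemma P_cycle:
  assumes "monomial_ideal (I :: 'k::field qpoly set)" "(u,T) \<in> Pset I p"
  shows "kcycle I p (kelem u T :: 'k kchain)"
proof -
  have id: "is_ideal I" using assms by (simp add: monomial_ideal_def)
  have P: "T \<subseteq> {0,1,2}" "card T = p" "\<And>j. j \<in> T \<Longrightarrow> monom (u + xvar j) \<in> I"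
    using assms(2) by (auto simp: Pset_def)
  show ?thesis unfolding kcycle_def
  proof (intro conjI allI)
    show "is_kchain p (kelem u T :: 'k kchain)" using P unfolding is_kchain_def kelem_def by auto
    fix T'
    show "kdiff (kelem u T :: 'k kchain) T' \<in> I" unfolding kdiff_def
    proof (rule ideal_sum[OF id], simp, goal_cases)
      case (1 j)
      show ?case
      proof (cases "insert j T' = T")
        case True
        then have "j \<in> T" by auto
        then have "X j * monom u \<in> I" using P(3) X_monom by metis
        then have "(-1) ^ card {i \<in> T'. i < j} * (X j * monom u) \<in> I" by (rule ideal_mult[OF id])
        then show ?thesis using True by (simp add: kelem_def mult.assoc)
      next
        case False
        then show ?thesis by (simp add: kelem_def ideal_zero[OF id])
      qed
    qed
  qed
qed

lemma P_colon:
  assumes "monomial_ideal (I :: 'k::field qpoly set)" "(u,T) \<in> Pset I p"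
  shows "monom u \<in> colon I (ideal_gen (X ` T))"
proof -
  have id: "is_ideal I" using assms by (simp add: monomial_ideal_def)
  have P: "\<And>j. j \<in> T \<Longrightarrow> monom (u + xvar j) \<in> I"
    using assms(2) by (auto simp: Pset_def)
  show ?thesis unfolding colon_def
  proof (intro CollectI ballI)
    fix g :: "'k qpoly" assume "g \<in> ideal_gen (X ` T)"
    then obtain F c where F: "finite F" "F \<subseteq> X ` T" "g = (\<Sum>t\<in>F. c t * t)"
      by (auto simp: ideal_gen_def)
    have "monom u * g = (\<Sum>t\<in>F. c t * (t * monom u))"
      by (simp add: F(3) sum_distrib_left mult_ac)
    also have "\<dots> \<in> I"
    proof (rule ideal_sum[OF id F(1)])
      fix t assume "t \<in> F"
      then obtain j where "j \<in> T" "t = X j" using F(2) by auto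
      then have "t * monom u \<in> I" using P X_monom by metis
      then show "c t * (t * monom u) \<in> I" by (rule ideal_mult[OF id])
    qed
    finally show "monom u * g \<in> I" .
  qed
qed


definition suppok :: "mon \<Rightarrow> nat set \<Rightarrow> bool" where
  "suppok a T \<longleftrightarrow> (\<forall>j\<in>T. 1 \<le> cmp a j)"

lemma mon_eqI: "cmp a 0 = cmp b 0 \<Longrightarrow> cmp a 1 = cmp b 1 \<Longrightarrow> cmp a 2 = cmp b 2 \<Longrightarrow> a = b"
  by (cases a; cases b) (simp add: cmp_def)

lemma cmp_add[simp]: "cmp (a + b) j = cmp a j + cmp b j"
  by (cases a; cases b) (simp add: cmp_def)

lemma cmp_diff[simp]: "cmp (a - b) j = cmp a j - cmp b j"
  by (cases a; cases b) (simp add: cmp_def)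

lemma cmp_ev0[simp]: "cmp (ev T) 0 = (if 0 \<in> T then 1 else 0)"
  and cmp_ev1[simp]: "cmp (ev T) (Suc 0) = (if Suc 0 \<in> T then 1 else 0)"
  and cmp_ev2[simp]: "cmp (ev T) 2 = (if 2 \<in> T then 1 else 0)"
  by (simp_all add: cmp_def ev_def)

lemma cmp_xvar0[simp]: "cmp (xvar i) 0 = (if i = 0 then 1 else 0)"
  and cmp_xvar1[simp]: "cmp (xvar i) (Suc 0) = (if i = Suc 0 then 1 else 0)"
  and cmp_xvar2[simp]: "i < 3 \<Longrightarrow> cmp (xvar i) 2 = (if i = 2 then 1 else 0)"
  by (simp_all add: cmp_def xvar_def)

lemma j012: "j \<in> {0,1,2::nat} \<Longrightarrow> j = 0 \<or> j = 1 \<or> j = 2" by auto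

lemma arith1:
  assumes "j \<in> {0,1,2}" "j \<notin> T" "1 \<le> cmp b j"
  shows "b - xvar j + ev (insert j T) = b + ev T"
  using j012[OF assms(1)] assms(2,3) by (intro mon_eqI) auto

lemma arith_cmp_ins:
  assumes "j \<in> {0,1,2}" "j \<notin> T"
  shows "cmp (b + ev T) j = cmp b j"
  using j012[OF assms(1)] assms(2) by auto

lemma ev_suppok: "S \<subseteq> {0,1,2} \<Longrightarrow> suppok (b + ev S) S"
  unfolding suppok_def by (auto dest!: j012)

lemma add_ev_diff[simp]: "(b + ev S) - ev S = b"
  by (rule add_diff_cancel_right')

lemma diff_ev_add:
  assumes "S \<subseteq> {0,1,2}" "suppok a S"
  shows "a - ev S + ev S = a"
proof (rule mon_eqI)
  show "cmp (a - ev S + ev S) 0 = cmp a 0" using assms by (auto simp: suppok_def)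
  show "cmp (a - ev S + ev S) 1 = cmp a 1" using assms by (auto simp: suppok_def)
  show "cmp (a - ev S + ev S) 2 = cmp a 2" using assms by (auto simp: suppok_def)
qed

lemma arith_facet:
  assumes "T \<subseteq> {0,1,2}" "j \<in> T" "suppok a T"
  shows "a - ev (T - {j}) = (a - ev T) + xvar j"
  using j012[of j] assms by (intro mon_eqI) (auto simp: suppok_def)

lemma arith_facet2:
  assumes "T \<subseteq> {0,1,2}" "j \<in> T"
  shows "(u + ev T) - ev (T - {j}) = u + xvar j"
  using j012[of j] assms by (intro mon_eqI) auto

lemma arith_ins:
  assumes "insert j T \<subseteq> {0,1,2}" "j \<notin> T" "suppok a (insert j T)"
  shows "a - ev T = (a - ev (insert j T)) + xvar j"
  using j012[of j] assms by (intro mon_eqI) (auto simp: suppok_def)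

lemma neg1_pow: "(-1::'k::field qpoly) ^ n = Poly_Mapping.single 0 ((-1) ^ n)"
proof (induction n)
  case 0 then show ?case by simp
next
  case (Suc n)
  have "(-1::'k qpoly) ^ Suc n = - ((-1) ^ n)" by simp
  also have "\<dots> = Poly_Mapping.single 0 (- ((-1) ^ n))" using Suc by (simp add: single_uminus)
  finally show ?case by simp
qed

lemma neg1_X: "((-1::'k::field qpoly) ^ n) * X j = Poly_Mapping.single (xvar j) ((-1) ^ n)"
  by (simp add: neg1_pow X_eq mult_single)

definition rep :: "'k::field kchain \<Rightarrow> (mon \<Rightarrow> nat set \<Rightarrow> 'k) \<Rightarrow> bool" where
  "rep f cf \<longleftrightarrow> (\<forall>S. \<not> S \<subseteq> {0,1,2} \<longrightarrow> f S = 0) \<and>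
     (\<forall>S b. S \<subseteq> {0,1,2} \<longrightarrow> lk (f S) b = cf (b + ev S) S) \<and>
     (\<forall>a S. cf a S \<noteq> 0 \<longrightarrow> S \<subseteq> {0,1,2} \<and> suppok a S)"

lemma repD1: "rep f cf \<Longrightarrow> \<not> S \<subseteq> {0,1,2} \<Longrightarrow> f S = 0"
  unfolding rep_def by blast

lemma repD2: "rep f cf \<Longrightarrow> S \<subseteq> {0,1,2} \<Longrightarrow> lk (f S) b = cf (b + ev S) S"
  unfolding rep_def by blast

lemma repD3: "rep f cf \<Longrightarrow> cf a S \<noteq> 0 \<Longrightarrow> S \<subseteq> {0,1,2} \<and> suppok a S"
  unfolding rep_def by blast

lemma KD:
  assumes "rep f cf"
  shows "lk (kdiff f T) b = dk (cf (b + ev T)) T"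
  unfolding kdiff_def dk_def lookup_sum
proof (rule sum.cong[OF refl])
  fix j assume j: "j \<in> {0,1,2} - T"
  let ?n = "card {i \<in> T. i < j}"
  have "lk ((-1) ^ ?n * X j * f (insert j T)) b = lk (Poly_Mapping.single (xvar j) ((-1) ^ ?n) * f (insert j T)) b"
    by (simp add: neg1_X)
  also have "\<dots> = (if 1 \<le> cmp b j then (-1) ^ ?n * lk (f (insert j T)) (b - xvar j) else 0)"
    by (rule lookup_Xmult)
  also have "\<dots> = sgn3 j T * cf (b + ev T) (insert j T)"
  proof (cases "1 \<le> cmp b j")
    case True
    show ?thesis
    proof (cases "T \<subseteq> {0,1,2}")
      case True2: True
      then have ins: "insert j T \<subseteq> {0,1,2}" using j by auto
      have e: "b - xvar j + ev (insert j T) = b + ev T" by (rule arith1) (use j True in auto)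
      have "lk (f (insert j T)) (b - xvar j) = cf (b + ev T) (insert j T)"
        using repD2[OF assms ins, of "b - xvar j"] e by simp
      then show ?thesis using True unfolding sgn3_def by simp
    next
      case False
      then have ni: "\<not> insert j T \<subseteq> {0,1,2}" by auto
      have "cf (b + ev T) (insert j T) = 0" using repD3[OF assms, of "b + ev T" "insert j T"] ni by auto
      moreover have "f (insert j T) = 0" using repD1[OF assms ni] .
      ultimately show ?thesis by simp
    qed
  next
    case False
    have "cf (b + ev T) (insert j T) = 0"
    proof (rule ccontr)
      assume "cf (b + ev T) (insert j T) \<noteq> 0"
      then have "suppok (b + ev T) (insert j T)" using repD3[OF assms, of "b + ev T" "insert j T"] by simp
      then have "1 \<le> cmp (b + ev T) j" by (simp add: suppok_def)
      then show False using arith_cmp_ins[of j T b] j False by auto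
    qed
    then show ?thesis using False by simp
  qed
  finally show "lk ((-1) ^ ?n * X j * f (insert j T)) b = sgn3 j T * cf (b + ev T) (insert j T)" .
qed

definition cz :: "'k::field kchain \<Rightarrow> mon \<Rightarrow> nat set \<Rightarrow> 'k" where
  "cz z a S = (if S \<subseteq> {0,1,2} \<and> suppok a S then lk (z S) (a - ev S) else 0)"

lemma rep_cz:
  assumes "is_kchain p z"
  shows "rep z (cz z)"
  unfolding rep_def
proof (intro conjI allI impI)
  show "z S = 0" if "\<not> S \<subseteq> {0,1,2}" for S using assms that by (auto simp: is_kchain_def)
  show "lk (z S) b = cz z (b + ev S) S" if "S \<subseteq> {0,1,2}" for S b
    using that ev_suppok[OF that, of b] by (simp add: cz_def)
  fix a S assume "cz z a S \<noteq> 0"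
  then show "S \<subseteq> {0,1,2}" "suppok a S" by (auto simp: cz_def split: if_splits)
qed

definition mkch :: "(mon \<times> nat set) set \<Rightarrow> (mon \<times> nat set \<Rightarrow> 'k::field) \<Rightarrow> 'k kchain" where
  "mkch G g = (\<lambda>S. \<Sum>x\<in>G. kscale (g x) (kelem (fst x) (snd x)) S)"

lemma lk_mkch:
  assumes "finite G"
  shows "lk (mkch G g S) b = (if (b,S) \<in> G then g (b,S) else 0)"
proof -
  have "lk (mkch G g S) b = (\<Sum>x\<in>G. if x = (b,S) then g x else 0)"
    unfolding mkch_def lookup_sum
    by (rule sum.cong[OF refl]) (auto simp: kscale_kelem lookup_single when_def)
  also have "\<dots> = (if (b,S) \<in> G then g (b,S) else 0)"
    using assms by (simp add: sum.delta)
  finally show ?thesis .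
qed

lemma mkch_nz: "mkch G g S \<noteq> 0 \<Longrightarrow> \<exists>x\<in>G. snd x = S"
proof (rule ccontr)
  assume "mkch G g S \<noteq> 0" "\<not> (\<exists>x\<in>G. snd x = S)"
  then have "\<forall>x\<in>G. kscale (g x) (kelem (fst x) (snd x)) S = 0" by (auto simp: kscale_kelem)
  then show False using \<open>mkch G g S \<noteq> 0\<close> unfolding mkch_def by simp
qed

definition Gof :: "mon set \<Rightarrow> (mon \<Rightarrow> nat set \<Rightarrow> 'k::field) \<Rightarrow> (mon \<times> nat set) set" where
  "Gof Al cf = {(u,T). T \<in> Pow {0,1,2} \<and> u + ev T \<in> Al \<and> cf (u + ev T) T \<noteq> 0}"

definition gof :: "(mon \<Rightarrow> nat set \<Rightarrow> 'k::field) \<Rightarrow> mon \<times> nat set \<Rightarrow> 'k" where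
  "gof cf x = cf (fst x + ev (snd x)) (snd x)"

lemma finite_Gof: "finite Al \<Longrightarrow> finite (Gof Al cf)"
proof -
  assume f: "finite Al"
  have "Gof Al cf \<subseteq> (\<lambda>(a,T). (a - ev T, T)) ` (Al \<times> Pow {0,1,2})"
  proof
    fix x assume "x \<in> Gof Al cf"
    then obtain u T where x: "x = (u,T)" "T \<in> Pow {0,1,2}" "u + ev T \<in> Al" by (auto simp: Gof_def)
    then show "x \<in> (\<lambda>(a,T). (a - ev T, T)) ` (Al \<times> Pow {0,1,2})"
      by (intro image_eqI[of _ _ "(u + ev T, T)"]) auto
  qed
  moreover have "finite ((\<lambda>(a,T). (a - ev T, T)) ` (Al \<times> Pow {0,1,2}))" using f by auto
  ultimately show ?thesis by (rule finite_subset)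
qed

lemma rep_mkch:
  assumes f: "finite Al" and h: "\<And>a S. cf a S \<noteq> 0 \<Longrightarrow> S \<subseteq> {0,1,2} \<and> suppok a S \<and> a \<in> Al"
  shows "rep (mkch (Gof Al cf) (gof cf)) cf"
  unfolding rep_def
proof (intro conjI allI impI)
  fix S :: "nat set" assume S: "\<not> S \<subseteq> {0,1,2}"
  show "mkch (Gof Al cf) (gof cf) S = 0"
  proof (rule ccontr)
    assume "mkch (Gof Al cf) (gof cf) S \<noteq> 0"
    then obtain x where "x \<in> Gof Al cf" "snd x = S" using mkch_nz by blast
    then show False using S by (auto simp: Gof_def)
  qed
next
  fix S :: "nat set" and b assume S: "S \<subseteq> {0,1,2}"
  show "lk (mkch (Gof Al cf) (gof cf) S) b = cf (b + ev S) S"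
  proof -
    have "lk (mkch (Gof Al cf) (gof cf) S) b = (if (b,S) \<in> Gof Al cf then gof cf (b,S) else 0)"
      by (rule lk_mkch[OF finite_Gof[OF f]])
    then show ?thesis using h[of "b + ev S" S] S by (cases "cf (b + ev S) S = 0") (auto simp: Gof_def gof_def)
  qed
next
  fix a S assume "cf a S \<noteq> 0"
  then show "S \<subseteq> {0,1,2}" "suppok a S" using h by auto
qed


definition Aset :: "mon \<Rightarrow> nat set" where
  "Aset a = {j. j \<in> {0,1,2} \<and> 1 \<le> cmp a j}"

definition NN :: "'k::field qpoly set \<Rightarrow> mon \<Rightarrow> nat set \<Rightarrow> bool" where
  "NN I a T \<longleftrightarrow> T \<subseteq> Aset a \<and> (monom (a - ev T) :: 'k qpoly) \<notin> I"

lemma Aset_sub: "Aset a \<subseteq> {0,1,2}" by (auto simp: Aset_def)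

lemma Aset_suppok: "T \<subseteq> Aset a \<Longrightarrow> T \<subseteq> {0,1,2} \<and> suppok a T"
  by (auto simp: Aset_def suppok_def)

lemma suppok_Aset: "T \<subseteq> {0,1,2} \<Longrightarrow> suppok a T \<Longrightarrow> T \<subseteq> Aset a"
  by (auto simp: Aset_def suppok_def)

definition c0 :: "'k::field qpoly set \<Rightarrow> 'k kchain \<Rightarrow> mon \<Rightarrow> nat set \<Rightarrow> 'k" where
  "c0 I z a T = (if NN I a T then cz z a T else 0)"

definition aa :: "'k::field qpoly set \<Rightarrow> mon \<Rightarrow> nat" where
  "aa I a = (if \<exists>j\<in>Aset a. \<not> NN I a {j} then SOME j. j \<in> Aset a \<and> \<not> NN I a {j} else SOME j. j \<in> Aset a)"

definition cw :: "'k::field qpoly set \<Rightarrow> nat \<Rightarrow> 'k kchain \<Rightarrow> mon \<Rightarrow> nat set \<Rightarrow> 'k" where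
  "cw I p z a = (if p = 3 then (\<lambda>_. 0) else hh (aa I a) (c0 I z a))"

definition cs :: "'k::field qpoly set \<Rightarrow> nat \<Rightarrow> 'k kchain \<Rightarrow> mon \<Rightarrow> nat set \<Rightarrow> 'k" where
  "cs I p z a T = (if NN I a T then (if p = 3 then c0 I z a T else hh (aa I a) (dk (c0 I z a)) T) else 0)"

lemma aa_in: "Aset a \<noteq> {} \<Longrightarrow> aa I a \<in> Aset a"
proof -
  assume ne: "Aset a \<noteq> {}"
  show ?thesis
  proof (cases "\<exists>j\<in>Aset a. \<not> NN I a {j}")
    case True
    then have "\<exists>j. j \<in> Aset a \<and> \<not> NN I a {j}" by blast
    from someI_ex[OF this] show ?thesis using True by (simp add: aa_def)
  next
    case False
    have "\<exists>j. j \<in> Aset a" using ne by blast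
    from someI_ex[OF this] show ?thesis using False by (simp add: aa_def)
  qed
qed

lemma aa_good: "j \<in> Aset a \<Longrightarrow> \<not> NN I a {j} \<Longrightarrow> aa I a \<in> Aset a \<and> \<not> NN I a {aa I a}"
proof -
  assume "j \<in> Aset a" "\<not> NN I a {j}"
  then have T: "\<exists>j\<in>Aset a. \<not> NN I a {j}" by blast
  then have "\<exists>j. j \<in> Aset a \<and> \<not> NN I a {j}" by blast
  from someI_ex[OF this] show ?thesis using T by (simp add: aa_def)
qed

lemma NN_up:
  assumes mi: "monomial_ideal (I :: 'k::field qpoly set)" and N: "NN I a T" and j: "j \<in> Aset a"
  shows "NN I a (insert j T)"
proof (cases "j \<in> T")
  case True then show ?thesis using N by (simp add: insert_absorb)
next
  case False
  have id: "is_ideal I" using mi by (simp add: monomial_ideal_def)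
  have sub: "insert j T \<subseteq> Aset a" using N j by (auto simp: NN_def)
  from Aset_suppok[OF sub] have s: "insert j T \<subseteq> {0,1,2}" "suppok a (insert j T)" by auto
  have "(monom (a - ev (insert j T)) :: 'k qpoly) \<notin> I"
  proof
    assume m: "(monom (a - ev (insert j T)) :: 'k qpoly) \<in> I"
    have "(monom (a - ev T) :: 'k qpoly) = monom (a - ev (insert j T)) * monom (xvar j)"
      using arith_ins[OF s(1) False s(2)] by (simp add: monom_add)
    also have "\<dots> = monom (xvar j) * monom (a - ev (insert j T))" by (simp add: mult.commute)
    also have "\<dots> \<in> I" using m by (rule ideal_mult[OF id])
    finally show False using N by (simp add: NN_def)
  qed
  then show ?thesis using sub by (simp add: NN_def)
qed

lemma dk_zero: "dk (\<lambda>_. 0 :: 'k::field) T = 0" by (simp add: dk_def)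

lemma hh_zero: "hh x (\<lambda>_. 0 :: 'k::field) = (\<lambda>_. 0)" by (simp add: hh_def fun_eq_iff)

lemma cz_outside: "j \<notin> Aset a \<Longrightarrow> j \<in> {0,1,2} \<Longrightarrow> cz z a (insert j T) = 0"
  by (auto simp: cz_def suppok_def Aset_def)

lemma c0_dk:
  assumes mi: "monomial_ideal (I :: 'k::field qpoly set)" and N: "NN I a T"
  shows "dk (c0 I z a) T = dk (cz z a) T"
  unfolding dk_def
proof (rule sum.cong[OF refl])
  fix j assume j: "j \<in> {0,1,2} - T"
  show "sgn3 j T * c0 I z a (insert j T) = sgn3 j T * cz z a (insert j T)"
  proof (cases "j \<in> Aset a")
    case True then show ?thesis using NN_up[OF mi N True] by (simp add: c0_def)
  next
    case False then show ?thesis using cz_outside[OF False, of z T] j by (simp add: c0_def)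
  qed
qed

lemma cyc:
  assumes mi: "monomial_ideal (I :: 'k::field qpoly set)" and cy: "kcycle I p z" and N: "NN I a T"
  shows "dk (cz z a) T = 0"
proof -
  have ch: "is_kchain p z" using cy by (simp add: kcycle_def)
  have kd: "kdiff z T \<in> I" using cy by (simp add: kcycle_def)
  have sub: "T \<subseteq> Aset a" and nm: "(monom (a - ev T) :: 'k qpoly) \<notin> I" using N by (auto simp: NN_def)
  from Aset_suppok[OF sub] have s: "T \<subseteq> {0,1,2}" "suppok a T" by auto
  have "a - ev T \<notin> Poly_Mapping.keys (kdiff z T)"
    using kd nm mem_monomial_ideal[OF mi, of "kdiff z T"] by blast
  then have "lk (kdiff z T) (a - ev T) = 0" by (simp add: in_keys_iff)
  moreover have "lk (kdiff z T) (a - ev T) = dk (cz z (a - ev T + ev T)) T"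
    by (rule KD[OF rep_cz[OF ch]])
  ultimately show ?thesis using diff_ev_add[OF s] by simp
qed

lemma c0_nz:
  assumes ch: "is_kchain p z" and nz: "c0 I z a T \<noteq> 0"
  shows "NN I a T \<and> card T = p \<and> cz z a T \<noteq> 0"
proof -
  have N: "NN I a T" and c: "cz z a T \<noteq> 0" using nz by (auto simp: c0_def split: if_splits)
  then have "z T \<noteq> 0" by (auto simp: cz_def split: if_splits)
  then have "card T = p" using ch by (simp add: is_kchain_def)
  then show ?thesis using N c by simp
qed

lemma c0_zero_empty:
  assumes ch: "is_kchain p z" and p1: "1 \<le> p" and e: "Aset a = {}"
  shows "c0 I z a = (\<lambda>_. 0)"
proof
  fix T show "c0 I z a T = 0"
  proof (rule ccontr)
    assume "c0 I z a T \<noteq> 0"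
    from c0_nz[OF ch this] have "T \<subseteq> Aset a" "card T = p" by (auto simp: NN_def)
    then show False using e p1 by simp
  qed
qed

lemma R1:
  assumes mi: "monomial_ideal (I :: 'k::field qpoly set)" and ch: "is_kchain p z" and p1: "1 \<le> p"
    and N: "NN I a S"
  shows "cz z a S = cs I p z a S + dk (cw I p z a) S"
proof (cases "p = 3")
  case True then show ?thesis using N by (simp add: cs_def cw_def c0_def dk_zero)
next
  case p3: False
  show ?thesis
  proof (cases "Aset a = {}")
    case True
    have c0z: "c0 I z a = (\<lambda>_. 0)" by (rule c0_zero_empty[OF ch p1 True])
    have "cz z a S = c0 I z a S" using N by (simp add: c0_def)
    then have "cz z a S = 0" using c0z by simp
    moreover have "dk (\<lambda>_. 0 :: 'k) = (\<lambda>_. 0)" by (simp add: fun_eq_iff dk_zero)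
    ultimately show ?thesis using N p3 c0z by (simp add: cs_def cw_def hh_zero dk_zero)
  next
    case False
    have A: "aa I a \<in> {0,1,2}" using aa_in[OF False, of I] Aset_sub[of a] by blast
    have S: "S \<subseteq> {0,1,2}" using N Aset_sub[of a] by (auto simp: NN_def)
    have "dk (hh (aa I a) (c0 I z a)) S + hh (aa I a) (dk (c0 I z a)) S = c0 I z a S"
      by (rule homotopy[OF A S])
    then show ?thesis using N p3 by (simp add: cs_def cw_def c0_def add.commute)
  qed
qed

lemma sum_nz: "sum f A \<noteq> 0 \<Longrightarrow> \<exists>x\<in>A. f x \<noteq> 0"
  by (meson sum.neutral)

lemma two_elem: "card T = 2 \<Longrightarrow> x \<in> T \<Longrightarrow> y \<in> T \<Longrightarrow> x \<noteq> y \<Longrightarrow> T = {x,y}"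
proof -
  assume c: "card T = 2" and xy: "x \<in> T" "y \<in> T" "x \<noteq> y"
  have f: "finite T" using c by (metis card.infinite zero_neq_numeral)
  have "{x,y} \<subseteq> T" using xy by auto
  moreover have "card {x,y} = card T" using c xy(3) by simp
  ultimately show ?thesis using f by (metis card_subset_eq)
qed

lemma one_elem: "card T = 1 \<Longrightarrow> x \<in> T \<Longrightarrow> y \<in> T \<Longrightarrow> x = y"
  by (metis card_1_singletonE singletonD)

lemma sgn3_nz: "sgn3 j T \<noteq> (0::'k::field)" by (simp add: sgn3_def)

lemma R2:
  assumes mi: "monomial_ideal (I :: 'k::field qpoly set)" and cy: "kcycle I p z"
    and p1: "1 \<le> p" and p3: "p \<le> 3" and nz: "cs I p z a T \<noteq> 0"
  shows "T \<subseteq> Aset a \<and> card T = p \<and> (\<forall>j\<in>T. (monom (a - ev (T - {j})) :: 'k qpoly) \<in> I) \<and> (\<exists>S. cz z a S \<noteq> 0)"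
proof -
  have ch: "is_kchain p z" using cy by (simp add: kcycle_def)
  have N: "NN I a T" using nz by (auto simp: cs_def split: if_splits)
  then have TA: "T \<subseteq> Aset a" by (simp add: NN_def)
  show ?thesis
  proof (cases "p = 3")
    case True
    then have "c0 I z a T \<noteq> 0" using nz N by (simp add: cs_def)
    from c0_nz[OF ch this] have cT: "card T = 3" and czT: "cz z a T \<noteq> 0" using True by auto
    have T012: "T \<subseteq> {0,1,2}" using TA Aset_sub[of a] by (rule subset_trans)
    have c3: "card {0,1,2::nat} = 3" by simp
    have T3: "T = {0,1,2}" by (rule card_subset_eq) (use T012 cT c3 in auto)
    have facet: "(monom (a - ev (T - {j})) :: 'k qpoly) \<in> I" if j: "j \<in> T" for j
    proof (rule ccontr)
      assume "(monom (a - ev (T - {j})) :: 'k qpoly) \<notin> I"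
      then have "NN I a (T - {j})" using TA by (auto simp: NN_def)
      then have "dk (cz z a) (T - {j}) = 0" by (rule cyc[OF mi cy])
      moreover have "{0,1,2} - (T - {j}) = {j}" using T3 j by auto
      moreover have "insert j (T - {j}) = T" using j by auto
      ultimately have "sgn3 j (T - {j}) * cz z a T = 0" by (simp add: dk_def)
      then show False using czT sgn3_nz[of j "T - {j}", where 'k='k] by simp
    qed
    show ?thesis using TA cT True facet czT by (intro conjI exI[of _ T]) auto
  next
    case p3': False
    have hnz: "hh (aa I a) (dk (c0 I z a)) T \<noteq> 0" using nz N p3' by (simp add: cs_def)
    then have aT: "aa I a \<in> T" and dnz: "dk (c0 I z a) (T - {aa I a}) \<noteq> 0"
      by (auto simp: hh_def split: if_splits)
    have notN: "\<not> NN I a (T - {aa I a})"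
    proof
      assume nn: "NN I a (T - {aa I a})"
      have "dk (c0 I z a) (T - {aa I a}) = dk (cz z a) (T - {aa I a})" by (rule c0_dk[OF mi nn])
      also have "\<dots> = 0" by (rule cyc[OF mi cy nn])
      finally show False using dnz by simp
    qed
    have TmA: "T - {aa I a} \<subseteq> Aset a" using TA by auto
    have f1: "(monom (a - ev (T - {aa I a})) :: 'k qpoly) \<in> I" using notN TmA by (simp add: NN_def)
    from sum_nz[OF dnz[unfolded dk_def]] obtain j where
      j: "j \<in> {0,1,2} - (T - {aa I a})" "sgn3 j (T - {aa I a}) * c0 I z a (insert j (T - {aa I a})) \<noteq> 0"
      by (rule bexE)
    then have "c0 I z a (insert j (T - {aa I a})) \<noteq> 0" by (metis mult_zero_right)
    from c0_nz[OF ch this] have cins: "card (insert j (T - {aa I a})) = p" and czn: "cz z a (insert j (T - {aa I a})) \<noteq> 0" by auto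
    have fT: "finite T" using finite_subset[OF subset_trans[OF TA Aset_sub[of a]]] by simp
    have jn: "j \<notin> T - {aa I a}" using j(1) by blast
    have fTm: "finite (T - {aa I a})" using fT by blast
    have "Suc (card (T - {aa I a})) = p" using cins card_insert_disjoint[OF fTm jn] by simp
    moreover have "card (T - {aa I a}) = card T - 1" using aT fT by simp
    moreover have "card T > 0" using aT fT by (auto simp: card_gt_0_iff)
    ultimately have cT: "card T = p" by linarith
    have facet: "(monom (a - ev (T - {i})) :: 'k qpoly) \<in> I" if i: "i \<in> T" for i
    proof (cases "i = aa I a")
      case True then show ?thesis using f1 by simp
    next
      case False
      have p2: "p = 2"
      proof (rule ccontr)
        assume "p \<noteq> 2"
        then have "p = 1" using p1 p3 p3' by linarith
        then show False using one_elem[of T i "aa I a"] cT i aT False by simp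
      qed
      have T2: "T = {aa I a, i}" using two_elem[of T "aa I a" i] cT p2 aT i False by simp
      then have "T - {aa I a} = {i}" using False by auto
      then have "\<not> NN I a {i}" using notN by simp
      moreover have "i \<in> Aset a" using TA i by auto
      ultimately have g: "aa I a \<in> Aset a \<and> \<not> NN I a {aa I a}" by (intro aa_good)
      have "T - {i} = {aa I a}" using T2 False by auto
      then show ?thesis using g by (simp add: NN_def)
    qed
    show ?thesis using TA cT facet czn by (intro conjI exI[of _ "insert j (T - {aa I a})"]) auto
  qed
qed

lemma R3:
  assumes ch: "is_kchain p z" and p1: "1 \<le> p" and nz: "cw I p z a T \<noteq> 0"
  shows "T \<subseteq> Aset a \<and> card T = Suc p \<and> (\<exists>S. cz z a S \<noteq> 0)"
proof -
  have p3: "p \<noteq> 3" and h: "hh (aa I a) (c0 I z a) T \<noteq> 0" using nz by (auto simp: cw_def split: if_splits)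
  then have aT: "aa I a \<in> T" and cnz: "c0 I z a (T - {aa I a}) \<noteq> 0" by (auto simp: hh_def split: if_splits)
  from c0_nz[OF ch cnz] have N: "NN I a (T - {aa I a})" and c: "card (T - {aa I a}) = p"
    and czn: "cz z a (T - {aa I a}) \<noteq> 0" by auto
  have sub: "T - {aa I a} \<subseteq> Aset a" using N by (simp add: NN_def)
  have "card (T - {aa I a}) \<noteq> 0" using c p1 by simp
  then have "T - {aa I a} \<noteq> {}" by (metis card.empty)
  then have "Aset a \<noteq> {}" using sub by auto
  then have "aa I a \<in> Aset a" by (rule aa_in)
  then have TA: "T \<subseteq> Aset a" using sub by auto
  have fT: "finite T" using finite_subset[OF subset_trans[OF TA Aset_sub[of a]]] by simp
  have "card T = Suc p" using c aT fT
    by (metis card_Suc_Diff1)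
  then show ?thesis using TA czn by (intro conjI exI[of _ "T - {aa I a}"]) auto
qed


definition Alph :: "'k::field kchain \<Rightarrow> mon set" where
  "Alph z = (\<lambda>(S,b). b + ev S) ` (SIGMA S: Pow {0,1,2}. Poly_Mapping.keys (z S))"

lemma finite_Alph: "finite (Alph z)"
  unfolding Alph_def by (intro finite_imageI finite_SigmaI) auto

lemma cz_Alph: "cz z a S \<noteq> 0 \<Longrightarrow> a \<in> Alph z"
proof -
  assume nz: "cz z a S \<noteq> 0"
  then have s: "S \<subseteq> {0,1,2}" "suppok a S" and l: "lk (z S) (a - ev S) \<noteq> 0"
    by (auto simp: cz_def split: if_splits)
  have "a = (\<lambda>(S,b). b + ev S) (S, a - ev S)" using diff_ev_add[OF s] by simp
  moreover have "(S, a - ev S) \<in> (SIGMA S: Pow {0,1,2}. Poly_Mapping.keys (z S))"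
    using s l by (simp add: in_keys_iff)
  ultimately show ?thesis unfolding Alph_def by (rule image_eqI)
qed

lemma main_span:
  assumes mi: "monomial_ideal (I :: 'k::field qpoly set)" and p1: "1 \<le> p" and p3: "p \<le> 3"
    and cy: "kcycle I p z"
  shows "\<exists>F c. finite F \<and> F \<subseteq> Pset I p \<and> kboundary I p (\<lambda>S. z S - mkch F c S)"
proof -
  have ch: "is_kchain p z" using cy by (simp add: kcycle_def)
  have id: "is_ideal I" using mi by (simp add: monomial_ideal_def)
  define Al where "Al = Alph z"
  define CS where "CS = cs I p z"
  define CW where "CW = cw I p z"
  define F where "F = Gof Al CS"
  define c where "c = gof CS"
  define w where "w = mkch (Gof Al CW) (gof CW)"
  have fAl: "finite Al" unfolding Al_def by (rule finite_Alph)
  have hCS: "S \<subseteq> {0,1,2} \<and> suppok a S \<and> a \<in> Al" if "CS a S \<noteq> 0" for a S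
  proof -
    from R2[OF mi cy p1 p3 that[unfolded CS_def]] obtain S' where
      A: "S \<subseteq> Aset a" and czS: "cz z a S' \<noteq> 0" by blast
    have "a \<in> Al" unfolding Al_def by (rule cz_Alph[OF czS])
    then show ?thesis using Aset_suppok[OF A] by simp
  qed
  have hCW: "S \<subseteq> {0,1,2} \<and> suppok a S \<and> a \<in> Al" if "CW a S \<noteq> 0" for a S
  proof -
    from R3[OF ch p1 that[unfolded CW_def]] obtain S' where
      A: "S \<subseteq> Aset a" and czS: "cz z a S' \<noteq> 0" by blast
    have "a \<in> Al" unfolding Al_def by (rule cz_Alph[OF czS])
    then show ?thesis using Aset_suppok[OF A] by simp
  qed
  have repz: "rep z (cz z)" by (rule rep_cz[OF ch])
  have reps: "rep (mkch F c) CS" unfolding F_def c_def by (rule rep_mkch[OF fAl hCS])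
  have repw: "rep w CW" unfolding w_def by (rule rep_mkch[OF fAl hCW])
  have fF: "finite F" unfolding F_def by (rule finite_Gof[OF fAl])
  have FP: "F \<subseteq> Pset I p"
  proof
    fix x assume "x \<in> F"
    then obtain u T where x: "x = (u,T)" "T \<subseteq> {0,1,2}" "CS (u + ev T) T \<noteq> 0"
      by (auto simp: F_def Gof_def)
    from R2[OF mi cy p1 p3 x(3)[unfolded CS_def]] have
      c: "card T = p" and fa: "\<forall>j\<in>T. (monom ((u + ev T) - ev (T - {j})) :: 'k qpoly) \<in> I" by auto
    have "\<forall>j\<in>T. (monom (u + xvar j) :: 'k qpoly) \<in> I"
      using fa arith_facet2[OF x(2)] by simp
    then show "x \<in> Pset I p" using x c by (simp add: Pset_def)
  qed
  have kc1: "is_kchain p (\<lambda>S. z S - mkch F c S)"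
    unfolding is_kchain_def
  proof (intro allI impI)
    fix S assume "z S - mkch F c S \<noteq> 0"
    then consider "z S \<noteq> 0" | "mkch F c S \<noteq> 0" by fastforce
    then show "S \<subseteq> {0,1,2} \<and> card S = p"
    proof cases
      case 1 then show ?thesis using ch by (simp add: is_kchain_def)
    next
      case 2
      then obtain x where xF: "x \<in> F" and xS: "snd x = S" using mkch_nz by blast
      then have "x \<in> Pset I p" using FP by blast
      then show ?thesis using xS by (cases x) (simp add: Pset_def)
    qed
  qed
  have kc2: "is_kchain (Suc p) w"
    unfolding is_kchain_def
  proof (intro allI impI)
    fix T assume "w T \<noteq> 0"
    then obtain x where x: "x \<in> Gof Al CW" "snd x = T" using mkch_nz unfolding w_def by blast
    then have "CW (fst x + ev T) T \<noteq> 0" by (auto simp: Gof_def)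
    from R3[OF ch p1 this[unfolded CW_def]] show "T \<subseteq> {0,1,2} \<and> card T = Suc p"
      using Aset_sub[of "fst x + ev T"] by auto
  qed
  have memI: "(z S - mkch F c S) - kdiff w S \<in> I" for S
  proof -
    have "lk ((z S - mkch F c S) - kdiff w S) b = 0" if nb: "(monom b :: 'k qpoly) \<notin> I" for b
    proof -
      have e: "lk ((z S - mkch F c S) - kdiff w S) b = lk (z S) b - lk (mkch F c S) b - lk (kdiff w S) b"
        by (simp add: lookup_minus)
      have kd: "lk (kdiff w S) b = dk (CW (b + ev S)) S" by (rule KD[OF repw])
      show ?thesis
      proof (cases "S \<subseteq> {0,1,2}")
        case True
        have N: "NN I (b + ev S) S"
          using suppok_Aset[OF True ev_suppok[OF True]] nb by (simp add: NN_def)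
        have "cz z (b + ev S) S = CS (b + ev S) S + dk (CW (b + ev S)) S"
          unfolding CS_def CW_def by (rule R1[OF mi ch p1 N])
        moreover have "lk (z S) b = cz z (b + ev S) S" by (rule repD2[OF repz True])
        moreover have "lk (mkch F c S) b = CS (b + ev S) S" by (rule repD2[OF reps True])
        ultimately show ?thesis using e kd by simp
      next
        case False
        have "z S = 0" by (rule repD1[OF repz False])
        moreover have "mkch F c S = 0" by (rule repD1[OF reps False])
        moreover have "dk (CW (b + ev S)) S = 0"
          unfolding dk_def
        proof (rule sum.neutral, intro ballI)
          fix j assume "j \<in> {0,1,2} - S"
          have "CW (b + ev S) (insert j S) = 0"
            using hCW[of "b + ev S" "insert j S"] False by auto
          then show "sgn3 j S * CW (b + ev S) (insert j S) = 0" by simp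
        qed
        ultimately show ?thesis using e kd by simp
      qed
    qed
    then have "\<forall>b\<in>Poly_Mapping.keys ((z S - mkch F c S) - kdiff w S). (monom b :: 'k qpoly) \<in> I"
      by (auto simp: in_keys_iff)
    then show ?thesis using mem_monomial_ideal[OF mi] by blast
  qed
  have "kboundary I p (\<lambda>S. z S - mkch F c S)"
    unfolding kboundary_def using kc1 kc2 memI by blast
  then show ?thesis using fF FP by blast
qed

lemma fsum_eq:
  "(\<lambda>S. \<Sum>(u,T)\<in>F. kscale (c (u,T)) (kelem u T) S) = (\<Sum>x\<in>F. kscale (c x) (kelem (fst x) (snd x)) :: 'k::field kchain)"
  by (rule ext) (simp add: sum_fun_apply case_prod_beta)

lemma mkch_eq: "mkch F c = (\<Sum>x\<in>F. kscale (c x) (kelem (fst x) (snd x)) :: 'k::field kchain)"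
  by (rule ext) (simp add: mkch_def sum_fun_apply)

theorem mainTheorem5:
  fixes I :: "'k::field qpoly set" and p :: nat
  assumes "monomial_ideal I"
    and "I \<noteq> {0}"
    and "I \<subseteq> max_ideal_sq"
    and "1 \<le> p" and "p \<le> 3 - depthR I"
  shows "\<exists>B. homology_basis I p B \<and>
           (\<forall>(u,T)\<in>B. T \<subseteq> {0,1,2} \<and> card T = p \<and>
              monom u \<in> colon I (ideal_gen (X ` T)))"
proof -
  have mi: "monomial_ideal I" and p1: "1 \<le> p" and p3: "p \<le> 3" using assms by auto
  define e where "e = (\<lambda>x. kelem (fst x) (snd x) :: 'k kchain)"
  have inj: "inj_on e (Pset I p)" unfolding e_def using kelem_inj by (rule inj_on_subset) simp
  have W: "kv.subspace (Collect (kboundary I p))" by (rule kb_subspace[OF mi])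
  have sp: "\<exists>s\<in>kv.span (e ` Pset I p). z - s \<in> Collect (kboundary I p)" if "z \<in> Collect (kcycle I p)" for z
  proof -
    have kcz: "kcycle I p z" using that by simp
    obtain F c where
      F: "finite F" "F \<subseteq> Pset I p" "kboundary I p (\<lambda>S. z S - mkch F c S)"
      using main_span[OF mi p1 p3 kcz] by blast
    have "mkch F c \<in> kv.span (e ` Pset I p)"
      unfolding mkch_eq
    proof (rule kv.span_sum)
      fix x assume "x \<in> F"
      then have "e x \<in> e ` Pset I p" using F(2) by auto
      then show "kscale (c x) (kelem (fst x) (snd x)) \<in> kv.span (e ` Pset I p)"
        unfolding e_def by (intro kv.span_scale kv.span_base)
    qed
    moreover have "z - mkch F c = (\<lambda>S. z S - mkch F c S)" by (rule ext) simp
    then have "z - mkch F c \<in> Collect (kboundary I p)" using F(3) by simp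
    ultimately show ?thesis by blast
  qed
  have qb: "\<exists>B\<subseteq>Pset I p. (\<forall>F c. finite F \<longrightarrow> F \<subseteq> B \<longrightarrow> (\<Sum>x\<in>F. kscale (c x) (e x)) \<in> Collect (kboundary I p) \<longrightarrow> (\<forall>x\<in>F. c x = 0))
     \<and> (\<forall>z\<in>Collect (kcycle I p). \<exists>F c. finite F \<and> F \<subseteq> B \<and> z - (\<Sum>x\<in>F. kscale (c x) (e x)) \<in> Collect (kboundary I p))"
    by (rule kv.quot_basis[OF W inj]) (rule sp)
  obtain B where B: "B \<subseteq> Pset I p"
    and ind: "\<forall>F c. finite F \<longrightarrow> F \<subseteq> B \<longrightarrow> (\<Sum>x\<in>F. kscale (c x) (e x)) \<in> Collect (kboundary I p) \<longrightarrow> (\<forall>x\<in>F. c x = 0)"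
    and spn: "\<forall>z\<in>Collect (kcycle I p). \<exists>F c. finite F \<and> F \<subseteq> B \<and> z - (\<Sum>x\<in>F. kscale (c x) (e x)) \<in> Collect (kboundary I p)"
    using qb by (elim exE conjE)
  have hb: "homology_basis I p B"
    unfolding homology_basis_def
  proof (intro conjI allI impI)
    show "\<forall>(u, T)\<in>B. kcycle I p (kelem u T)"
    proof (intro ballI, clarify)
      fix u T assume "(u,T) \<in> B"
      then show "kcycle I p (kelem u T)" using B by (intro P_cycle[OF mi]) auto
    qed
  next
    fix F c
    assume a: "finite F \<and> F \<subseteq> B \<and> kboundary I p (\<lambda>S. \<Sum>(u, T)\<in>F. kscale (c (u, T)) (kelem u T) S)"
    then have "(\<Sum>x\<in>F. kscale (c x) (e x)) \<in> Collect (kboundary I p)"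
      unfolding e_def fsum_eq by simp
    then show "\<forall>b\<in>F. c b = 0" using ind[rule_format, of F c] a by auto
  next
    fix z assume "kcycle I p z"
    then obtain F c where F: "finite F" "F \<subseteq> B" "z - (\<Sum>x\<in>F. kscale (c x) (e x)) \<in> Collect (kboundary I p)"
      using spn[rule_format, of z] \<open>kcycle I p z\<close> by auto
    have "z - (\<Sum>x\<in>F. kscale (c x) (e x)) = (\<lambda>S. z S - (\<Sum>(u, T)\<in>F. kscale (c (u, T)) (kelem u T) S))"
      unfolding e_def fsum_eq[symmetric] by (rule ext) simp
    then show "\<exists>F c. finite F \<and> F \<subseteq> B \<and> kboundary I p (\<lambda>S. z S - (\<Sum>(u, T)\<in>F. kscale (c (u, T)) (kelem u T) S))"
      using F by (intro exI[of _ F] exI[of _ c]) auto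
  qed
  have side: "\<forall>(u,T)\<in>B. T \<subseteq> {0,1,2} \<and> card T = p \<and> monom u \<in> colon I (ideal_gen (X ` T))"
  proof (intro ballI)
    fix x assume "x \<in> B"
    then obtain u T where x: "x = (u,T)" "(u,T) \<in> Pset I p" using B by (cases x) auto
    then show "case x of (u, T) \<Rightarrow> T \<subseteq> {0,1,2} \<and> card T = p \<and> monom u \<in> colon I (ideal_gen (X ` T))"
      using P_colon[OF mi x(2)] by (simp add: Pset_def)
  qed
  show ?thesis by (intro exI[of _ B] conjI hb side)
qed

end
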